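(* For $t>0$ and $c>0$ let $f(t)=2\,\mathrm{arsh}\bigl(c\,\mathrm{sh}(t/2)\bigr)$ and $g(t)=ct$. If $c\in(0,1)$, then $f(t)/g(t)$ is an increasing function from $(0,\infty)$ to $(1,1/c)$; if $c>1$, then $f(t)/g(t)$ is a decreasing function from $(0,\infty)$ to $(1/c,1)$. In particular, for $c\in(0,1)$ and $t\ge0$, \[ ct\le 2\,\mathrm{arsh}\bigl(c\,\mathrm{sh}(t/2)\bigr)\le t, \] and for $c>1$ and $t\ge0$, \[ t\le 2\,\mathrm{arsh}\bigl(c\,\mathrm{sh}(t/2)\bigr)\le ct. \]
   Context: $\mathrm{sh}$ is the hyperbolic sine and $\mathrm{arsh}$ its inverse. *)

theory Defs
  imports Complex_Main
begin

definition f35 :: "real \<Rightarrow> real \<Rightarrow> real" where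
  "f35 c t = 2 * arsinh (c * sinh (t / 2))"

definition g35 :: "real \<Rightarrow> real \<Rightarrow> real" where
  "g35 c t = c * t"

end

theory Submission imports Defs "HOL-Real_Asymp.Real_Asymp" begin

definition fd35 :: "real \<Rightarrow> real \<Rightarrow> real" where
  "fd35 c t = c * cosh (t/2) / sqrt ((c * sinh (t/2))^2 + 1)"

lemma f35_deriv: "(f35 c has_real_derivative fd35 c t) (at t)"
proof -
  have inner: "((\<lambda>t. c * sinh (t/2)) has_real_derivative c * (cosh (t/2) * (1/2))) (at t)"
    by (rule derivative_eq_intros refl | simp)+
  have "((\<lambda>t. arsinh (c * sinh (t / 2))) has_real_derivative
        (1 / sqrt ((c * sinh (t/2))^2 + 1)) * (c * (cosh (t/2) * (1/2)))) (at t)"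
    by (rule DERIV_chain2[OF arsinh_real_has_field_derivative inner])
  then have "((\<lambda>t. 2 * arsinh (c * sinh (t / 2))) has_real_derivative
        2 * ((1 / sqrt ((c * sinh (t/2))^2 + 1)) * (c * (cosh (t/2) * (1/2))))) (at t)"
    by (rule DERIV_cmult)
  then show ?thesis
    by (simp add: f35_def[abs_def] fd35_def field_simps)
qed

lemma fd35_mono:
  assumes c: "c > 0" and ab: "0 \<le> a" "a < b"
  shows "(c < 1 \<longrightarrow> fd35 c a < fd35 c b) \<and> (c > 1 \<longrightarrow> fd35 c a > fd35 c b)"
proof -
  define A where "A = cosh (a/2)"
  define B where "B = cosh (b/2)"
  have AB: "A < B" unfolding A_def B_def using ab by (intro cosh_real_strict_mono) auto
  have A1: "A \<ge> 1" unfolding A_def by (rule cosh_real_ge_1)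
  have sa: "(sinh (a/2))^2 = A^2 - 1" unfolding A_def by (simp add: sinh_square_eq)
  have sb: "(sinh (b/2))^2 = B^2 - 1" unfolding B_def by (simp add: sinh_square_eq)
  define SA where "SA = (c * sinh (a/2))^2 + 1"
  define SB where "SB = (c * sinh (b/2))^2 + 1"
  have SA: "SA = c^2 * (A^2 - 1) + 1" unfolding SA_def using sa by (simp add: power_mult_distrib)
  have SB: "SB = c^2 * (B^2 - 1) + 1" unfolding SB_def using sb by (simp add: power_mult_distrib)
  have SApos: "SA > 0" "SB > 0" unfolding SA_def SB_def by (auto intro: add_nonneg_pos)
  have fa: "fd35 c a = c * A / sqrt SA" unfolding fd35_def A_def SA_def by simp
  have fb: "fd35 c b = c * B / sqrt SB" unfolding fd35_def B_def SB_def by simp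
  have A2B2: "A^2 < B^2" using AB A1 by (intro power_strict_mono) auto
  have diff: "(A * sqrt SB)^2 - (B * sqrt SA)^2 = (1 - c^2) * (A^2 - B^2)"
    using SApos by (simp add: power_mult_distrib SA SB algebra_simps)
  have eq: "fd35 c a < fd35 c b \<longleftrightarrow> A * sqrt SB < B * sqrt SA"
    using SApos c by (simp add: fa fb field_simps)
  have eq2: "fd35 c b < fd35 c a \<longleftrightarrow> B * sqrt SA < A * sqrt SB"
    using SApos c by (simp add: fa fb field_simps)
  have p1: "A * sqrt SB \<ge> 0" "B * sqrt SA \<ge> 0" using A1 AB SApos by auto
  show ?thesis
  proof safe
    assume "c < 1"
    then have "c^2 < 1" using c by (simp add: power_less_one_iff)
    then have "(A * sqrt SB)^2 < (B * sqrt SA)^2" using diff A2B2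
      by (smt (verit) mult_pos_neg)
    then show "fd35 c a < fd35 c b" using eq p1 by (meson power_less_imp_less_base)
  next
    assume "c > 1"
    then have "c^2 > 1" using c by (simp add: one_less_power)
    then have "(A * sqrt SB)^2 > (B * sqrt SA)^2" using diff A2B2
      by (smt (verit) mult_neg_neg)
    then show "fd35 c b < fd35 c a" using eq2 p1 by (meson power_less_imp_less_base)
  qed
qed

lemma key35:
  assumes c: "c > 0" and t: "t > 0"
  shows "(c < 1 \<longrightarrow> t * fd35 c t - f35 c t > 0) \<and> (c > 1 \<longrightarrow> t * fd35 c t - f35 c t < 0)"
proof -
  obtain z where z: "0 < z" "z < t" "f35 c t - f35 c 0 = (t - 0) * fd35 c z"
    using MVT2[OF t, of "f35 c" "fd35 c"] f35_deriv by blast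
  have f0: "f35 c 0 = 0" by (simp add: f35_def)
  have ft: "f35 c t = t * fd35 c z" using z f0 by simp
  have m: "(c < 1 \<longrightarrow> fd35 c z < fd35 c t) \<and> (c > 1 \<longrightarrow> fd35 c z > fd35 c t)"
    using fd35_mono[OF c, of z t] z by auto
  show ?thesis
    using m t by (auto simp: ft algebra_simps)
qed


lemma R35_deriv:
  assumes c: "c > 0" and t: "t > 0"
  shows "((\<lambda>t. f35 c t / g35 c t) has_real_derivative
           c * (t * fd35 c t - f35 c t) / (c * t * (c * t))) (at t)"
proof -
  have g: "(g35 c has_real_derivative c) (at t)"
    unfolding g35_def[abs_def] by (rule derivative_eq_intros refl | simp)+
  have "((\<lambda>t. f35 c t / g35 c t) has_real_derivative
           (fd35 c t * g35 c t - f35 c t * c) / (g35 c t * g35 c t)) (at t)"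
    by (rule DERIV_divide[OF f35_deriv g]) (use c t in \<open>simp add: g35_def\<close>)
  then show ?thesis by (simp add: g35_def algebra_simps)
qed

lemma R35_cont:
  assumes c: "c > 0" and t: "t > 0"
  shows "isCont (\<lambda>t. f35 c t / g35 c t) t"
  using R35_deriv[OF c t] by (rule DERIV_isCont)

lemma R35_lim0:
  assumes c: "c > 0"
  shows "((\<lambda>t. f35 c t / g35 c t) \<longlongrightarrow> 1) (at_right 0)"
  unfolding f35_def[abs_def] g35_def[abs_def] using c by real_asymp

lemma R35_liminf:
  assumes c: "c > 0"
  shows "((\<lambda>t. f35 c t / g35 c t) \<longlongrightarrow> 1/c) at_top"
proof -
  have "((\<lambda>t. f35 c t / g35 c t) \<longlongrightarrow> inverse c) at_top"
    unfolding f35_def[abs_def] g35_def[abs_def] using c by real_asymp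
  then show ?thesis by (simp add: inverse_eq_divide)
qed

lemma R35_mono:
  assumes c: "c > 0" "c < 1"
  shows "strict_mono_on {0<..} (\<lambda>t. f35 c t / g35 c t)"
proof (rule strict_mono_onI)
  fix r s :: real assume rs: "r \<in> {0<..}" "s \<in> {0<..}" "r < s"
  show "f35 c r / g35 c r < f35 c s / g35 c s"
  proof (rule DERIV_pos_imp_increasing[OF rs(3)])
    fix x assume x: "r \<le> x" "x \<le> s"
    then have xp: "x > 0" using rs by auto
    have "x * fd35 c x - f35 c x > 0" using key35[OF c(1) xp] c by auto
    then have "c * (x * fd35 c x - f35 c x) / (c * x * (c * x)) > 0" using c xp by simp
    then show "\<exists>y. ((\<lambda>t. f35 c t / g35 c t) has_real_derivative y) (at x) \<and> y > 0"
      using R35_deriv[OF c(1) xp] by blast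
  qed
qed

lemma R35_antimono:
  assumes c: "c > 1"
  shows "strict_antimono_on {0<..} (\<lambda>t. f35 c t / g35 c t)"
proof (rule monotone_onI)
  fix r s :: real assume rs: "r \<in> {0<..}" "s \<in> {0<..}" "r < s"
  have c0: "c > 0" using c by simp
  show "f35 c r / g35 c r > f35 c s / g35 c s"
  proof (rule DERIV_neg_imp_decreasing[OF rs(3)])
    fix x assume x: "r \<le> x" "x \<le> s"
    then have xp: "x > 0" using rs by auto
    have "x * fd35 c x - f35 c x < 0" using key35[OF c0 xp] c by auto
    then have "c * (x * fd35 c x - f35 c x) / (c * x * (c * x)) < 0" using c xp
      by (simp add: divide_neg_pos mult_pos_neg)
    then show "\<exists>y. ((\<lambda>t. f35 c t / g35 c t) has_real_derivative y) (at x) \<and> y < 0"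
      using R35_deriv[OF c0 xp] by blast
  qed
qed


lemma image_inc:
  fixes R :: "real \<Rightarrow> real"
  assumes mono: "strict_mono_on {0<..} R"
    and cont: "\<And>t. t > 0 \<Longrightarrow> isCont R t"
    and l0: "(R \<longlongrightarrow> L0) (at_right 0)" and l1: "(R \<longlongrightarrow> L1) at_top"
  shows "R ` {0<..} = {L0<..<L1}"
proof
  show "R ` {0<..} \<subseteq> {L0<..<L1}"
  proof (rule image_subsetI)
  fix t :: real assume t: "t \<in> {0<..}"
  have "R (t/2) < R t" using t by (intro strict_mono_onD[OF mono]) auto
  moreover have "L0 \<le> R (t/2)"
  proof (rule tendsto_upperbound[OF l0])
    show "\<forall>\<^sub>F x in at_right 0. R x \<le> R (t/2)"
      unfolding eventually_at_right_field using t
      by (intro exI[of _ "t/2"]) (auto intro: strict_mono_on_leD[OF mono])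
  qed simp
  moreover have "R t < R (t+1)" using t by (intro strict_mono_onD[OF mono]) auto
  moreover have "R (t+1) \<le> L1"
  proof (rule tendsto_lowerbound[OF l1])
    show "\<forall>\<^sub>F x in at_top. R (t+1) \<le> R x"
      unfolding eventually_at_top_linorder using t
      by (intro exI[of _ "t+1"]) (auto intro: strict_mono_on_leD[OF mono])
  qed simp
  ultimately show "R t \<in> {L0<..<L1}" by simp
  qed
next
  show "{L0<..<L1} \<subseteq> R ` {0<..}"
  proof
  fix y assume y: "y \<in> {L0<..<L1}"
  have "\<forall>\<^sub>F x in at_right 0. R x < y" using l0 y by (auto intro: order_tendstoD)
  then obtain b where b: "b > 0" "\<And>x. x > 0 \<Longrightarrow> x < b \<Longrightarrow> R x < y"
    unfolding eventually_at_right_field by auto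
  have "\<forall>\<^sub>F x in at_top. R x > y" using l1 y by (auto intro: order_tendstoD)
  then obtain B where B: "\<And>x. x \<ge> B \<Longrightarrow> R x > y"
    unfolding eventually_at_top_linorder by auto
  define a where "a = b/2"
  define B' where "B' = max B (b/2)"
  have a: "a > 0" "R a < y" using b by (auto simp: a_def)
  have "R B' > y" using B by (simp add: B'_def)
  have "a \<le> B'" by (simp add: a_def B'_def)
  obtain x where x: "a \<le> x" "x \<le> B'" "R x = y"
    using IVT[of R a y B'] a \<open>R B' > y\<close> \<open>a \<le> B'\<close> cont by force
  then show "y \<in> R ` {0<..}" using a by force
  qed
qed

lemma image_dec:
  fixes R :: "real \<Rightarrow> real"
  assumes mono: "strict_antimono_on {0<..} R"
    and cont: "\<And>t. t > 0 \<Longrightarrow> isCont R t"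
    and l0: "(R \<longlongrightarrow> L0) (at_right 0)" and l1: "(R \<longlongrightarrow> L1) at_top"
  shows "R ` {0<..} = {L1<..<L0}"
proof -
  have m: "strict_mono_on {0<..} (\<lambda>t. - R t)"
    using mono by (auto simp: monotone_on_def)
  have "(\<lambda>t. - R t) ` {0<..} = {-L0<..<-L1}"
    by (rule image_inc[OF m]) (auto intro: cont continuous_intros tendsto_minus l0 l1)
  then have "uminus ` ((\<lambda>t. - R t) ` {0<..}) = uminus ` {-L0<..<-L1}" by simp
  also have "uminus ` ((\<lambda>t. - R t) ` {0<..}) = R ` {0<..}" by (simp add: image_image)
  also have "uminus ` {-L0<..<-L1} = {L1<..<L0}" by simp
  finally show ?thesis .
qed

theorem proposition3p5:
  fixes c :: real
  assumes "c > 0"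
  shows "(c < 1 \<longrightarrow>
            strict_mono_on {0<..} (\<lambda>t. f35 c t / g35 c t) \<and>
            (\<lambda>t. f35 c t / g35 c t) ` {0<..} = {1<..<1/c} \<and>
            (\<forall>t::real. t \<ge> 0 \<longrightarrow> c * t \<le> 2 * arsinh (c * sinh (t / 2)) \<and>
                                     2 * arsinh (c * sinh (t / 2)) \<le> t))
       \<and> (c > 1 \<longrightarrow>
            strict_antimono_on {0<..} (\<lambda>t. f35 c t / g35 c t) \<and>
            (\<lambda>t. f35 c t / g35 c t) ` {0<..} = {1/c<..<1} \<and>
            (\<forall>t::real. t \<ge> 0 \<longrightarrow> t \<le> 2 * arsinh (c * sinh (t / 2)) \<and>
                                     2 * arsinh (c * sinh (t / 2)) \<le> c * t))"
proof (intro conjI impI)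
  assume c1: "c < 1"
  have c: "c > 0" using assms .
  show m: "strict_mono_on {0<..} (\<lambda>t. f35 c t / g35 c t)" by (rule R35_mono[OF c c1])
  show im: "(\<lambda>t. f35 c t / g35 c t) ` {0<..} = {1<..<1/c}"
    by (rule image_inc[OF m R35_cont[OF c] R35_lim0[OF c] R35_liminf[OF c]])
  show "\<forall>t::real. t \<ge> 0 \<longrightarrow> c * t \<le> 2 * arsinh (c * sinh (t / 2)) \<and>
                                     2 * arsinh (c * sinh (t / 2)) \<le> t"
  proof (intro allI impI)
    fix t :: real assume t: "t \<ge> 0"
    show "c * t \<le> 2 * arsinh (c * sinh (t / 2)) \<and> 2 * arsinh (c * sinh (t / 2)) \<le> t"
    proof (cases "t = 0")
      case True then show ?thesis by simp
    next
      case False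
      then have tp: "t > 0" using t by simp
      have "f35 c t / g35 c t \<in> {1<..<1/c}" using im tp by blast
      then have "1 < f35 c t / (c * t)" "f35 c t / (c * t) < 1 / c" by (auto simp: g35_def)
      then have "c * t < f35 c t" "f35 c t < t" using c tp by (auto simp: field_simps)
      then show ?thesis by (simp add: f35_def)
    qed
  qed
next
  assume c1: "c > 1"
  have c: "c > 0" using assms .
  show m: "strict_antimono_on {0<..} (\<lambda>t. f35 c t / g35 c t)" by (rule R35_antimono[OF c1])
  show im: "(\<lambda>t. f35 c t / g35 c t) ` {0<..} = {1/c<..<1}"
    by (rule image_dec[OF m R35_cont[OF c] R35_lim0[OF c] R35_liminf[OF c]])
  show "\<forall>t::real. t \<ge> 0 \<longrightarrow> t \<le> 2 * arsinh (c * sinh (t / 2)) \<and>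
                                     2 * arsinh (c * sinh (t / 2)) \<le> c * t"
  proof (intro allI impI)
    fix t :: real assume t: "t \<ge> 0"
    show "t \<le> 2 * arsinh (c * sinh (t / 2)) \<and> 2 * arsinh (c * sinh (t / 2)) \<le> c * t"
    proof (cases "t = 0")
      case True then show ?thesis by simp
    next
      case False
      then have tp: "t > 0" using t by simp
      have "f35 c t / g35 c t \<in> {1/c<..<1}" using im tp by blast
      then have "1 / c < f35 c t / (c * t)" "f35 c t / (c * t) < 1" by (auto simp: g35_def)
      then have "t < f35 c t" "f35 c t < c * t" using c tp by (auto simp: field_simps)
      then show ?thesis by (simp add: f35_def)
    qed
  qed
qed

end
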